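(* Let $\mu>0$ and let $\eta:\mathbb{R}^n\to\mathbb{R}^n$ be the element-wise symmetric clipping operator, $\eta(\boldsymbol{u})_j=-\mu$ if $u_j\le-\mu$, $\eta(\boldsymbol{u})_j=u_j$ if $u_j\in(-\mu,\mu)$, $\eta(\boldsymbol{u})_j=\mu$ if $u_j\ge\mu$. For any two cones $\mathcal{X},\mathcal{X}'\subseteq\mathbb{R}^n$ with $\mathcal{X}\neq\mathcal{X}'$, we have $\eta(\mathcal{X})\neq\eta(\mathcal{X}')$, where $\eta(\mathcal{X})=\{\eta(\boldsymbol{x}):\boldsymbol{x}\in\mathcal{X}\}$.
   Context: A set $\mathcal{X}\subseteq\mathbb{R}^n$ is a cone (scale invariant) if $g\mathcal{X}=\mathcal{X}$ for all $g\in\mathbb{R}^*_+=(0,\infty)$, where $g\mathcal{X}=\{g\boldsymbol{x}:\boldsymbol{x}\in\mathcal{X}\}$. *)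

theory Defs
  imports "HOL-Analysis.Analysis"
begin

definition is_cone :: "(real ^ 'n) set \<Rightarrow> bool" where
  "is_cone X \<longleftrightarrow> (\<forall>g::real. g > 0 \<longrightarrow> (\<lambda>x. g *\<^sub>R x) ` X = X)"

definition clip :: "real \<Rightarrow> real ^ 'n \<Rightarrow> real ^ 'n" where
  "clip \<mu> u = (\<chi> j. if u $ j \<le> - \<mu> then - \<mu>
                     else if u $ j \<ge> \<mu> then \<mu> else u $ j)"

end

theory Submission
  imports Defs
begin

lemma clip_fix:
  assumes "\<forall>j. \<bar>clip \<mu> u $ j\<bar> < \<mu>"
  shows "clip \<mu> u = u"
proof -
  have "clip \<mu> u $ j = u $ j" for j
    using assms[rule_format, of j] by (auto simp: clip_def split: if_splits)
  then show ?thesis by (simp add: vec_eq_iff)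
qed

lemma clip_small:
  assumes "\<mu> > 0" "\<forall>j. \<bar>u $ j\<bar> < \<mu>"
  shows "clip \<mu> u = u"
  unfolding clip_def vec_eq_iff
proof
  fix i show "(\<chi> j. if u $ j \<le> - \<mu> then - \<mu> else if u $ j \<ge> \<mu> then \<mu> else u $ j) $ i = u $ i"
    using assms(2)[rule_format, of i] by auto
qed

lemma cone_mem:
  assumes "is_cone X" "g > 0" "x \<in> X" shows "g *\<^sub>R x \<in> X"
proof -
  have "(\<lambda>x. g *\<^sub>R x) ` X = X" using assms unfolding is_cone_def by blast
  then show ?thesis using assms(3) by blast
qed

lemma one_side:
  fixes X X' :: "(real ^ 'n) set"
  assumes "\<mu> > 0" "is_cone X" "is_cone X'" "x \<in> X" "x \<notin> X'"
  shows "clip \<mu> ` X \<noteq> clip \<mu> ` X'"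
proof
  assume eq: "clip \<mu> ` X = clip \<mu> ` X'"
  define t where "t = \<mu> / (2 * (norm x + 1))"
  have tpos: "t > 0" using assms(1) unfolding t_def
    by (intro divide_pos_pos) (auto, smt (verit) norm_ge_zero)
  have small: "\<bar>(t *\<^sub>R x) $ j\<bar> < \<mu>" for j
  proof -
    have "\<bar>(t *\<^sub>R x) $ j\<bar> = t * \<bar>x $ j\<bar>" using tpos by (simp add: abs_mult)
    also have "\<dots> \<le> t * norm x" using tpos component_le_norm_cart[of x j]
      by (simp add: mult_left_mono)
    also have "\<dots> < \<mu>"
    proof -
      have "t * norm x = \<mu> * norm x / (2 * (norm x + 1))" unfolding t_def by simp
      also have "\<dots> < \<mu>" using assms(1)
        by (simp add: divide_less_eq add_pos_nonneg) (smt (verit) norm_ge_zero mult_left_mono)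
      finally show ?thesis .
    qed
    finally show ?thesis .
  qed
  have y: "t *\<^sub>R x \<in> X" using cone_mem[OF assms(2) tpos assms(4)] .
  have cy: "clip \<mu> (t *\<^sub>R x) = t *\<^sub>R x" using clip_small[OF assms(1)] small by blast
  then have "t *\<^sub>R x \<in> clip \<mu> ` X'" using eq y by (metis image_eqI)
  then obtain x' where x': "x' \<in> X'" "t *\<^sub>R x = clip \<mu> x'" by blast
  then have "clip \<mu> x' = x'" using clip_fix small by metis
  with x' have "t *\<^sub>R x \<in> X'" by simp
  from cone_mem[OF assms(3), of "inverse t", OF _ this] tpos have "x \<in> X'" by simp
  with assms(5) show False by simp
qed

theorem proposition2:
  fixes \<mu> :: real and X X' :: "(real ^ 'n) set"
  assumes "\<mu> > 0"
    and "is_cone X" and "is_cone X'"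
    and "X \<noteq> X'"
  shows "clip \<mu> ` X \<noteq> clip \<mu> ` X'"
proof -
  obtain x where "x \<in> X \<and> x \<notin> X' \<or> x \<in> X' \<and> x \<notin> X" using assms(4) by blast
  then show ?thesis using one_side assms by metis
qed

end
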